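(* Let $\mathbb N^n$ be the free commutative monoid on generators $a_1,\dots,a_n$, let $T^n\subset\mathbb N^n$ be the set of products $a_{i_1}a_{i_2}\cdots a_{i_k}$ with $1\leqslant i_1<\dots<i_k\leqslant n$ (including the empty product $1$), and let $\mathfrak FT^n$ be the full subcategory of $\mathfrak F\mathbb N^n$ with object set $T^n$. Then the inclusion $\mathfrak FT^n\subset\mathfrak F\mathbb N^n$ is strong coinitial.
   Context: For a monoid $M$, $\mathfrak FM$ has objects the elements of $M$ and morphisms $\alpha\to\beta$ the pairs $(f,g)$ with $g\alpha f=\beta$; composition $(f_2,g_2)\circ(f_1,g_1)=(f_1f_2,g_2g_1)$. A functor $S:\mathcal C\to\mathcal D$ of small categories is strong coinitial if for every object $d$ the comma category $S/d$ (objects $(c,\alpha:S(c)\to d)$; morphisms $f:c_1\to c_2$ with $\alpha_2\circ S(f)=\alpha_1$) is connected and satisfies $\varinjlim{}_q^{S/d}\Delta\mathbb Z=0$ for $q>0$, where $\Delta\mathbb Z$ is the constant functor with value $\mathbb Z$ and $\varinjlim{}_q$ the left derived functors of the colimit. *)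

theory Defs
  imports "HOL-Algebra.Group"
begin

record ('o,'m) cat =
  Obj :: "'o set"
  Arr :: "'m set"
  Dom :: "'m \<Rightarrow> 'o"
  Cod :: "'m \<Rightarrow> 'o"
  Comp :: "'m \<Rightarrow> 'm \<Rightarrow> 'm"   (* Comp g f = g \<circ> f *)
  Ident :: "'o \<Rightarrow> 'm"

text \<open>An arrow \<open>(f,g) : \<alpha> \<rightarrow> \<beta>\<close> with \<open>g \<alpha> f = \<beta>\<close> is represented by the triple
  \<open>(\<alpha>, f, g)\<close>; its codomain is \<open>g \<alpha> f\<close>.\<close>

definition FCat :: "('a,'b) monoid_scheme \<Rightarrow> ('a, 'a \<times> 'a \<times> 'a) cat" where
  "FCat M = \<lparr> Obj = carrier M,
              Arr = carrier M \<times> carrier M \<times> carrier M,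
              Dom = (\<lambda>(\<alpha>,f,g). \<alpha>),
              Cod = (\<lambda>(\<alpha>,f,g). g \<otimes>\<^bsub>M\<^esub> \<alpha> \<otimes>\<^bsub>M\<^esub> f),
              Comp = (\<lambda>(\<beta>,f2,g2) (\<alpha>,f1,g1). (\<alpha>, f1 \<otimes>\<^bsub>M\<^esub> f2, g2 \<otimes>\<^bsub>M\<^esub> g1)),
              Ident = (\<lambda>\<alpha>. (\<alpha>, \<one>\<^bsub>M\<^esub>, \<one>\<^bsub>M\<^esub>)) \<rparr>"

definition full_subcat :: "('o,'m) cat \<Rightarrow> 'o set \<Rightarrow> ('o,'m) cat" where
  "full_subcat C S = C \<lparr> Obj := S,
       Arr := {f \<in> Arr C. Dom C f \<in> S \<and> Cod C f \<in> S} \<rparr>"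

definition comma ::
  "('o,'m) cat \<Rightarrow> ('p,'n) cat \<Rightarrow> ('o \<Rightarrow> 'p) \<Rightarrow> ('m \<Rightarrow> 'n) \<Rightarrow> 'p
     \<Rightarrow> ('o \<times> 'n, 'm \<times> ('o \<times> 'n) \<times> ('o \<times> 'n)) cat" where
  "comma C D So Sa d =
     (let ob = {(c, \<alpha>). c \<in> Obj C \<and> \<alpha> \<in> Arr D \<and> Dom D \<alpha> = So c \<and> Cod D \<alpha> = d} in
     \<lparr> Obj = ob,
       Arr = {(f, x, y). x \<in> ob \<and> y \<in> ob \<and> f \<in> Arr C \<and> Dom C f = fst x \<and> Cod C f = fst y
                 \<and> Comp D (snd y) (Sa f) = snd x},
       Dom = (\<lambda>(f, x, y). x),
       Cod = (\<lambda>(f, x, y). y),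
       Comp = (\<lambda>(g, y, z) (f, x, y'). (Comp C g f, x, z)),
       Ident = (\<lambda>x. (Ident C (fst x), x, x)) \<rparr>)"

definition connected_cat :: "('o,'m) cat \<Rightarrow> bool" where
  "connected_cat C \<longleftrightarrow> Obj C \<noteq> {} \<and>
     (\<forall>x\<in>Obj C. \<forall>y\<in>Obj C.
        (\<lambda>a b. \<exists>f\<in>Arr C. (Dom C f = a \<and> Cod C f = b) \<or> (Dom C f = b \<and> Cod C f = a))\<^sup>*\<^sup>* x y)"

fun composable :: "('o,'m) cat \<Rightarrow> 'o \<Rightarrow> 'm list \<Rightarrow> bool" where
  "composable C c [] = True"
| "composable C c (f # fs) = (f \<in> Arr C \<and> Dom C f = c \<and> composable C (Cod C f) fs)"

text \<open>An \<open>n\<close>-simplex \<open>c0 \<rightarrow> c1 \<rightarrow> \<dots> \<rightarrow> cn\<close> of the nerve is \<open>(c0, [f1,\<dots>,fn])\<close>.\<close>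

definition nerve :: "('o,'m) cat \<Rightarrow> nat \<Rightarrow> ('o \<times> 'm list) set" where
  "nerve C n = {(c, fs). c \<in> Obj C \<and> length fs = n \<and> composable C c fs}"

definition face :: "('o,'m) cat \<Rightarrow> nat \<Rightarrow> 'o \<times> 'm list \<Rightarrow> 'o \<times> 'm list" where
  "face C i s = (let (c, fs) = s; n = length fs in
     if i = 0 then (Cod C (hd fs), tl fs)
     else if i = n then (c, butlast fs)
     else (c, take (i - 1) fs @ [Comp C (fs ! i) (fs ! (i - 1))] @ drop (i + 1) fs))"

definition chains :: "('o,'m) cat \<Rightarrow> nat \<Rightarrow> ('o \<times> 'm list \<Rightarrow> int) set" where
  "chains C n = {x. finite {s. x s \<noteq> 0} \<and> {s. x s \<noteq> 0} \<subseteq> nerve C n}"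

definition boundary :: "('o,'m) cat \<Rightarrow> nat \<Rightarrow> ('o \<times> 'm list \<Rightarrow> int) \<Rightarrow> ('o \<times> 'm list \<Rightarrow> int)" where
  "boundary C n x = (\<lambda>t. \<Sum>s\<in>{s. x s \<noteq> 0}. \<Sum>i\<in>{0..n}.
       if face C i s = t then (-1) ^ i * x s else 0)"

text \<open>\<open>colim_q^C \<Delta>\<int> = H_q(N C; \<int>)\<close>; vanishing in degree \<open>q \<ge> 1\<close>.\<close>

definition colim_Z_vanishes :: "('o,'m) cat \<Rightarrow> nat \<Rightarrow> bool" where
  "colim_Z_vanishes C q \<longleftrightarrow>
     (\<forall>x\<in>chains C q. boundary C q x = (\<lambda>_. 0) \<longrightarrow>
        (\<exists>y\<in>chains C (Suc q). boundary C (Suc q) y = x))"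

definition strong_coinitial ::
  "('o,'m) cat \<Rightarrow> ('p,'n) cat \<Rightarrow> ('o \<Rightarrow> 'p) \<Rightarrow> ('m \<Rightarrow> 'n) \<Rightarrow> bool" where
  "strong_coinitial C D So Sa \<longleftrightarrow>
     (\<forall>d\<in>Obj D. connected_cat (comma C D So Sa d) \<and>
        (\<forall>q>0. colim_Z_vanishes (comma C D So Sa d) q))"

text \<open>Elements of \<open>\<nat>^n\<close> are exponent vectors \<open>nat \<Rightarrow> nat\<close> supported on \<open>{..<n}\<close>;
  generator \<open>a_{i+1}\<close> is the indicator of \<open>i\<close>; the product is pointwise addition.\<close>

definition Nmon :: "nat \<Rightarrow> (nat \<Rightarrow> nat) monoid" where
  "Nmon n = \<lparr> carrier = {a. \<forall>i\<ge>n. a i = 0}, mult = (\<lambda>a b j. a j + b j), one = (\<lambda>_. 0) \<rparr>"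

definition Tset :: "nat \<Rightarrow> (nat \<Rightarrow> nat) set" where
  "Tset n = {(\<lambda>j. if j \<in> I then 1 else 0) | I. I \<subseteq> {..<n}}"

end

theory Submission
  imports Defs "HOL-Library.Poly_Mapping"
begin

definition dl :: "nat \<Rightarrow> 'a list \<Rightarrow> 'a list" where
  "dl j L = take j L @ drop (Suc j) L"

definition bd :: "'a list \<Rightarrow> 'a list \<Rightarrow>\<^sub>0 int" where
  "bd L = (\<Sum>j<length L. frag_cmul ((-1)^j) (frag_of (dl j L)))"

definition Dl :: "('a list \<Rightarrow>\<^sub>0 int) \<Rightarrow> ('a list \<Rightarrow>\<^sub>0 int)" where
  "Dl = frag_extend bd"

definition consf :: "'a \<Rightarrow> ('a list \<Rightarrow>\<^sub>0 int) \<Rightarrow> ('a list \<Rightarrow>\<^sub>0 int)" where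
  "consf v = frag_extend (\<lambda>L. frag_of (v # L))"

definition mapf :: "('a \<Rightarrow> 'a) \<Rightarrow> ('a list \<Rightarrow>\<^sub>0 int) \<Rightarrow> ('a list \<Rightarrow>\<^sub>0 int)" where
  "mapf f = frag_extend (\<lambda>L. frag_of (map f L))"

definition snocf :: "'a \<Rightarrow> ('a list \<Rightarrow>\<^sub>0 int) \<Rightarrow> ('a list \<Rightarrow>\<^sub>0 int)" where
  "snocf v = frag_extend (\<lambda>L. frag_of (L @ [v]))"

fun h1 :: "('a \<Rightarrow> 'a) \<Rightarrow> ('a \<Rightarrow> 'a) \<Rightarrow> 'a list \<Rightarrow> 'a list \<Rightarrow>\<^sub>0 int" where
  "h1 p q [] = 0"
| "h1 p q (c # r) = frag_of (p c # q c # map q r) - consf (p c) (h1 p q r)"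

definition Hl :: "('a \<Rightarrow> 'a) \<Rightarrow> ('a \<Rightarrow> 'a) \<Rightarrow> ('a list \<Rightarrow>\<^sub>0 int) \<Rightarrow> ('a list \<Rightarrow>\<^sub>0 int)" where
  "Hl p q = frag_extend (h1 p q)"

lemma frag_extend_frag_extend:
  "frag_extend f (frag_extend g x) = frag_extend (\<lambda>y. frag_extend f (g y)) x"
  using subset_UNIV by (induction x rule: frag_induction) (auto simp: frag_extend_diff)

lemma dl_Cons_0 [simp]: "dl 0 (v # L) = L"
  by (simp add: dl_def)

lemma dl_Cons_Suc [simp]: "dl (Suc j) (v # L) = v # dl j L"
  by (simp add: dl_def)

lemma bd_Cons: "bd (v # L) = frag_of L - consf v (bd L)"
proof -
  have "bd (v # L) = frag_of L + (\<Sum>j<length L. frag_cmul ((-1)^Suc j) (frag_of (v # dl j L)))"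
    unfolding bd_def by (simp only: length_Cons sum.lessThan_Suc_shift) (simp del: power_Suc)
  also have "(\<Sum>j<length L. frag_cmul ((-1)^Suc j) (frag_of (v # dl j L)))
     = - (\<Sum>j<length L. frag_cmul ((-1)^j) (frag_of (v # dl j L)))"
    by (simp add: sum_negf[symmetric])
  also have "(\<Sum>j<length L. frag_cmul ((-1)^j) (frag_of (v # dl j L))) = consf v (bd L)"
    unfolding consf_def bd_def by (simp add: frag_extend_sum frag_extend_cmul o_def)
  finally show ?thesis by simp
qed

lemma consf_of [simp]: "consf v (frag_of L) = frag_of (v # L)"
  by (simp add: consf_def)
lemma mapf_of [simp]: "mapf f (frag_of L) = frag_of (map f L)"
  by (simp add: mapf_def)
lemma snocf_of [simp]: "snocf v (frag_of L) = frag_of (L @ [v])"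
  by (simp add: snocf_def)
lemma Dl_of [simp]: "Dl (frag_of L) = bd L"
  by (simp add: Dl_def)
lemma Hl_of [simp]: "Hl p q (frag_of L) = h1 p q L"
  by (simp add: Hl_def)

lemma consf_diff: "consf v (a - b) = consf v a - consf v b"
  by (simp add: consf_def frag_extend_diff)
lemma mapf_diff: "mapf f (a - b) = mapf f a - mapf f b"
  by (simp add: mapf_def frag_extend_diff)
lemma snocf_diff: "snocf f (a - b) = snocf f a - snocf f b"
  by (simp add: snocf_def frag_extend_diff)
lemma Dl_diff: "Dl (a - b) = Dl a - Dl b"
  by (simp add: Dl_def frag_extend_diff)
lemma Hl_diff: "Hl p q (a - b) = Hl p q a - Hl p q b"
  by (simp add: Hl_def frag_extend_diff)
lemma Dl_add: "Dl (a + b) = Dl a + Dl b"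
  by (simp add: Dl_def frag_extend_add)
lemma Dl_cmul: "Dl (frag_cmul k a) = frag_cmul k (Dl a)"
  by (simp add: Dl_def frag_extend_cmul)
lemma Dl_minus: "Dl (- a) = - Dl a"
  by (simp add: Dl_def frag_extend_minus)

lemma Dl_zero [simp]: "Dl 0 = 0" by (simp add: Dl_def)
lemma consf_zero [simp]: "consf v 0 = 0" by (simp add: consf_def)
lemma mapf_zero [simp]: "mapf v 0 = 0" by (simp add: mapf_def)
lemma snocf_zero [simp]: "snocf v 0 = 0" by (simp add: snocf_def)
lemma Hl_zero [simp]: "Hl p q 0 = 0" by (simp add: Hl_def)
lemma consf_add: "consf v (a + b) = consf v a + consf v b"
  by (simp add: consf_def frag_extend_add)
lemma frag_cmul_diff2: "frag_cmul k (a - b) = frag_cmul k a - frag_cmul k b"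
  by (rule poly_mapping_eqI) (simp add: lookup_minus algebra_simps)
lemma Dl_consf: "Dl (consf v x) = x - consf v (Dl x)"
  using subset_UNIV by (induction x rule: frag_induction)
     (auto simp: Dl_diff consf_diff bd_Cons)

lemma dl_map: "dl j (map f L) = map f (dl j L)"
  by (simp add: dl_def take_map drop_map)

lemma bd_map: "bd (map f L) = mapf f (bd L)"
  unfolding bd_def mapf_def by (simp add: frag_extend_sum frag_extend_cmul o_def dl_map)

lemma Dl_mapf: "Dl (mapf f x) = mapf f (Dl x)"
  using subset_UNIV by (induction x rule: frag_induction)
     (auto simp: Dl_diff mapf_diff bd_map)

lemma Hl_consf: "Hl p q (consf c x) = consf (p c) (consf (q c) (mapf q x)) - consf (p c) (Hl p q x)"
  using subset_UNIV by (induction x rule: frag_induction)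
     (auto simp: Hl_diff mapf_diff consf_diff)

lemma prism1: "Dl (h1 p q M) + Hl p q (bd M) = frag_of (map q M) - frag_of (map p M)"
proof (induction M)
  case Nil
  then show ?case by (simp add: bd_def Hl_def)
next
  case (Cons c r)
  have "Dl (h1 p q (c # r)) + Hl p q (bd (c # r))
     = (frag_of (q c # map q r) - consf (p c) (frag_of (map q r) - consf (q c) (mapf q (bd r))))
       - (h1 p q r - consf (p c) (Dl (h1 p q r)))
       + (h1 p q r - (consf (p c) (consf (q c) (mapf q (bd r))) - consf (p c) (Hl p q (bd r))))"
    by (simp add: Dl_diff Dl_consf bd_Cons Hl_diff Hl_consf bd_map)
  also have "\<dots> = frag_of (q c # map q r) - consf (p c) (frag_of (map q r))
       + consf (p c) (Dl (h1 p q r) + Hl p q (bd r))"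
    by (simp add: consf_diff consf_add algebra_simps)
  also have "\<dots> = frag_of (map q (c # r)) - frag_of (map p (c # r))"
    using Cons by (simp add: consf_diff)
  finally show ?case .
qed

lemma prism: "Dl (Hl p q x) + Hl p q (Dl x) = mapf q x - mapf p x"
using subset_UNIV proof (induction x rule: frag_induction)
  case (one L)
  then show ?case by (simp add: prism1)
next
  case (diff a b)
  have "Dl (Hl p q (a - b)) + Hl p q (Dl (a - b)) = (Dl (Hl p q a) + Hl p q (Dl a)) - (Dl (Hl p q b) + Hl p q (Dl b))"
    by (simp add: Dl_diff Hl_diff)
  then show ?case using diff by (simp add: mapf_diff)
qed auto

lemma dl_snoc: "j < length L \<Longrightarrow> dl j (L @ [v]) = dl j L @ [v]"
  by (simp add: dl_def)

lemma bd_snoc: "bd (L @ [v]) = snocf v (bd L) + frag_cmul ((-1)^length L) (frag_of L)"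
  unfolding bd_def snocf_def
  by (simp add: frag_extend_sum frag_extend_cmul o_def dl_snoc dl_def)

lemma cone:
  assumes "Poly_Mapping.keys x \<subseteq> {L. length L = m}"
  shows "Dl (snocf v x) = snocf v (Dl x) + frag_cmul ((-1)^m) x"
  using assms
proof (induction x rule: frag_induction)
  case (one L)
  then show ?case by (simp add: bd_snoc)
next
  case (diff a b)
  have "Dl (snocf v (a - b)) = Dl (snocf v a) - Dl (snocf v b)"
    by (simp add: Dl_diff snocf_diff)
  then show ?case using diff by (simp add: Dl_diff snocf_diff frag_cmul_diff2)
qed auto


lemma keys_consf: "Poly_Mapping.keys (consf v x) \<subseteq> (\<lambda>L. v # L) ` Poly_Mapping.keys x"
proof -
  have "Poly_Mapping.keys (consf v x) \<subseteq> (\<Union>L\<in>Poly_Mapping.keys x. Poly_Mapping.keys (frag_of (v # L)))"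
    unfolding consf_def by (rule keys_frag_extend)
  then show ?thesis by (simp add: keys_frag_of) blast
qed
lemma keys_mapf: "Poly_Mapping.keys (mapf f x) \<subseteq> map f ` Poly_Mapping.keys x"
proof -
  have "Poly_Mapping.keys (mapf f x) \<subseteq> (\<Union>L\<in>Poly_Mapping.keys x. Poly_Mapping.keys (frag_of (map f L)))"
    unfolding mapf_def by (rule keys_frag_extend)
  then show ?thesis by (simp add: keys_frag_of) blast
qed
lemma keys_snocf: "Poly_Mapping.keys (snocf v x) \<subseteq> (\<lambda>L. L @ [v]) ` Poly_Mapping.keys x"
proof -
  have "Poly_Mapping.keys (snocf v x) \<subseteq> (\<Union>L\<in>Poly_Mapping.keys x. Poly_Mapping.keys (frag_of (L @ [v])))"
    unfolding snocf_def by (rule keys_frag_extend)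
  then show ?thesis by (simp add: keys_frag_of) blast
qed

lemma keys_bd: "Poly_Mapping.keys (bd L) \<subseteq> {dl j L | j. j < length L}"
proof -
  have "Poly_Mapping.keys (bd L) \<subseteq> (\<Union>j\<in>{..<length L}. Poly_Mapping.keys (frag_cmul ((-1)^j) (frag_of (dl j L))))"
    unfolding bd_def by (rule keys_sum)
  also have "\<dots> \<subseteq> (\<Union>j\<in>{..<length L}. Poly_Mapping.keys (frag_of (dl j L)))"
    using keys_cmul by (meson UN_mono order_refl)
  finally show ?thesis by (simp add: keys_frag_of) blast
qed

lemma keys_Dl: "Poly_Mapping.keys (Dl x) \<subseteq> (\<Union>L\<in>Poly_Mapping.keys x. {dl j L | j. j < length L})"
proof -
  have "Poly_Mapping.keys (Dl x) \<subseteq> (\<Union>L\<in>Poly_Mapping.keys x. Poly_Mapping.keys (bd L))"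
    unfolding Dl_def by (rule keys_frag_extend)
  then show ?thesis using keys_bd by blast
qed

lemma keys_h1: "Poly_Mapping.keys (h1 p q M) \<subseteq> {map p (take (Suc i) M) @ map q (drop i M) | i. i < length M}"
proof (induction M)
  case Nil
  then show ?case by simp
next
  case (Cons c r)
  have "Poly_Mapping.keys (h1 p q (c # r)) \<subseteq> {p c # q c # map q r} \<union> (\<lambda>L. p c # L) ` Poly_Mapping.keys (h1 p q r)"
  proof -
    have "Poly_Mapping.keys (h1 p q (c # r)) \<subseteq> Poly_Mapping.keys (frag_of (p c # q c # map q r)) \<union> Poly_Mapping.keys (consf (p c) (h1 p q r))"
      by (simp only: h1.simps) (rule keys_diff)
    then show ?thesis using keys_consf[of "p c" "h1 p q r"] by (simp add: keys_frag_of) blast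
  qed
  also have "\<dots> \<subseteq> {map p (take (Suc i) (c # r)) @ map q (drop i (c # r)) | i. i < length (c # r)}"
  proof -
    have "p c # q c # map q r \<in> {map p (take (Suc i) (c # r)) @ map q (drop i (c # r)) | i. i < length (c # r)}"
      by (rule CollectI, rule exI[of _ 0]) simp
    moreover have "p c # L \<in> {map p (take (Suc i) (c # r)) @ map q (drop i (c # r)) | i. i < length (c # r)}"
      if L: "L \<in> Poly_Mapping.keys (h1 p q r)" for L
    proof -
      obtain i where "i < length r" "L = map p (take (Suc i) r) @ map q (drop i r)"
        using Cons.IH L by blast
      then show ?thesis by (intro CollectI exI[of _ "Suc i"]) simp
    qed
    ultimately show ?thesis by blast
  qed
  finally show ?case .
qed

locale preo =
  fixes R :: "'a \<Rightarrow> 'a \<Rightarrow> bool" and A :: "'a set"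
  assumes Rtrans: "R a b \<Longrightarrow> R b c \<Longrightarrow> R a c"
begin

definition V :: "nat \<Rightarrow> 'a list set" where
  "V m = {L. length L = Suc m \<and> set L \<subseteq> A \<and> sorted_wrt R L}"

definition monof :: "('a \<Rightarrow> 'a) \<Rightarrow> bool" where
  "monof f \<longleftrightarrow> (\<forall>a\<in>A. f a \<in> A) \<and> (\<forall>a\<in>A. \<forall>b\<in>A. R a b \<longrightarrow> R (f a) (f b))"

lemma dl_V:
  assumes "L \<in> V (Suc m)" "j < length L"
  shows "dl j L \<in> V m"
proof -
  have L: "length L = Suc (Suc m)" "set L \<subseteq> A" "sorted_wrt R L"
    using assms by (auto simp: V_def)
  have c: "\<forall>x\<in>set (take j L). \<forall>y\<in>set (drop j L). R x y"
    using L(3) sorted_wrt_append[of R "take j L" "drop j L"] by simp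
  have st: "sorted_wrt R (take j L)" using L(3) by (rule sorted_wrt_take)
  have sd: "sorted_wrt R (drop (Suc j) L)" using L(3) by (rule sorted_wrt_drop)
  have sub: "set (drop (Suc j) L) \<subseteq> set (drop j L)"
    by (rule set_drop_subset_set_drop) simp
  have "sorted_wrt R (dl j L)"
    unfolding dl_def sorted_wrt_append using st sd sub c by blast
  moreover have "set (dl j L) \<subseteq> set L"
    unfolding dl_def using set_take_subset set_drop_subset by (metis Un_subset_iff set_append)
  moreover have "length (dl j L) = Suc m"
    using L assms(2) by (simp add: dl_def)
  ultimately show ?thesis using L(2) by (simp add: V_def)
qed

lemma keys_Dl_V: "Poly_Mapping.keys x \<subseteq> V (Suc m) \<Longrightarrow> Poly_Mapping.keys (Dl x) \<subseteq> V m"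
proof
  fix L' assume x: "Poly_Mapping.keys x \<subseteq> V (Suc m)" and "L' \<in> Poly_Mapping.keys (Dl x)"
  then obtain L j where "L \<in> Poly_Mapping.keys x" "j < length L" "L' = dl j L"
    using keys_Dl[of x] by blast
  then show "L' \<in> V m" using dl_V x by blast
qed

lemma map_V: "monof f \<Longrightarrow> L \<in> V m \<Longrightarrow> map f L \<in> V m"
proof -
  assume f: "monof f" and L: "L \<in> V m"
  have "sorted_wrt (\<lambda>x y. R (f x) (f y)) L"
    by (rule sorted_wrt_mono_rel[of _ R]) (use f L in \<open>auto simp: V_def monof_def\<close>)
  then show ?thesis using f L by (auto simp: V_def monof_def sorted_wrt_map)
qed

lemma keys_mapf_V: "monof f \<Longrightarrow> Poly_Mapping.keys x \<subseteq> V m \<Longrightarrow> Poly_Mapping.keys (mapf f x) \<subseteq> V m"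
proof
  fix L' assume f: "monof f" and x: "Poly_Mapping.keys x \<subseteq> V m" and "L' \<in> Poly_Mapping.keys (mapf f x)"
  then obtain L where "L \<in> Poly_Mapping.keys x" "L' = map f L"
    using keys_mapf[of f x] by blast
  then show "L' \<in> V m" using map_V f x by blast
qed

lemma prism_V:
  assumes p: "monof p" and q: "monof q" and pq: "\<forall>a\<in>A. R (p a) (q a)"
    and M: "M \<in> V m" and i: "i < length M"
  shows "map p (take (Suc i) M) @ map q (drop i M) \<in> V (Suc m)"
proof -
  have M': "length M = Suc m" "set M \<subseteq> A" "sorted_wrt R M" using M by (auto simp: V_def)
  have "sorted_wrt R (map p M)" using map_V[OF p M] by (simp add: V_def)
  then have "sorted_wrt R (take (Suc i) (map p M))" by (rule sorted_wrt_take)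
  then have s1: "sorted_wrt R (map p (take (Suc i) M))" by (simp add: take_map)
  have "sorted_wrt R (map q M)" using map_V[OF q M] by (simp add: V_def)
  then have "sorted_wrt R (drop i (map q M))" by (rule sorted_wrt_drop)
  then have s2: "sorted_wrt R (map q (drop i M))" by (simp add: drop_map)
  have cross: "\<forall>x\<in>set (map p (take (Suc i) M)). \<forall>y\<in>set (map q (drop i M)). R x y"
  proof (intro ballI)
    fix x y assume xy: "x \<in> set (map p (take (Suc i) M))" "y \<in> set (map q (drop i M))"
    obtain a where a: "a < Suc i" "a < length M" "x = p (M ! a)"
      using xy(1) by (auto simp: in_set_conv_nth)
    obtain b where b: "b < length M - i" "y = q (M ! (i + b))"
      using xy(2) by (auto simp: in_set_conv_nth)
    have ib: "i + b < length M" using b by simp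
    have inA: "M ! a \<in> A" "M ! (i+b) \<in> A"
      using M'(2) nth_mem[OF a(2)] nth_mem[OF ib] by blast+
    show "R x y"
    proof (cases "a = i + b")
      case True
      then show ?thesis using a b pq inA by simp
    next
      case False
      then have "a < i + b" using a by simp
      then have "R (M ! a) (M ! (i+b))" using M'(3) ib by (simp add: sorted_wrt_iff_nth_less)
      then have "R (p (M ! a)) (p (M ! (i+b)))" using p inA by (simp add: monof_def)
      moreover have "R (p (M ! (i+b))) (q (M ! (i+b)))" using pq inA by blast
      ultimately show ?thesis using a b Rtrans by blast
    qed
  qed
  have "set (map p (take (Suc i) M)) \<subseteq> A"
    using p M'(2) set_take_subset[of "Suc i" M] by (auto simp: monof_def)
  moreover have "set (map q (drop i M)) \<subseteq> A"
    using q M'(2) set_drop_subset[of i M] by (auto simp: monof_def)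
  moreover have "length (map p (take (Suc i) M) @ map q (drop i M)) = Suc (Suc m)"
    using M'(1) i by simp
  moreover have "sorted_wrt R (map p (take (Suc i) M) @ map q (drop i M))"
    unfolding sorted_wrt_append using s1 s2 cross by blast
  ultimately show ?thesis unfolding V_def by (simp only: set_append Un_subset_iff mem_Collect_eq)
qed

lemma keys_Hl_V:
  assumes p: "monof p" and q: "monof q" and pq: "\<forall>a\<in>A. R (p a) (q a)"
    and X: "Poly_Mapping.keys X \<subseteq> V m"
  shows "Poly_Mapping.keys (Hl p q X) \<subseteq> V (Suc m)"
proof -
  have "Poly_Mapping.keys (Hl p q X) \<subseteq> (\<Union>M\<in>Poly_Mapping.keys X. Poly_Mapping.keys (h1 p q M))"
    unfolding Hl_def by (rule keys_frag_extend)
  also have "\<dots> \<subseteq> V (Suc m)"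
    using keys_h1 prism_V[OF p q pq] X by fastforce
  finally show ?thesis .
qed

lemma mapf_id:
  assumes "Poly_Mapping.keys X \<subseteq> V m" "\<forall>a\<in>A. f a = a"
  shows "mapf f X = X"
  using assms(1)
proof (induction X rule: frag_induction)
  case (one L)
  then have "map f L = L" using assms(2) by (auto simp: V_def intro: map_idI)
  then show ?case by simp
next
  case (diff a b)
  then show ?case by (simp add: mapf_diff)
qed simp

lemma contract:
  assumes mono: "\<And>k. monof (\<Phi> k)"
    and cmp: "\<And>k. k < N \<Longrightarrow> (\<forall>a\<in>A. R (\<Phi> k a) (\<Phi> (Suc k) a)) \<or> (\<forall>a\<in>A. R (\<Phi> (Suc k) a) (\<Phi> k a))"
    and idN: "\<forall>a\<in>A. \<Phi> N a = a" and T: "T \<in> A" and T0: "\<forall>a\<in>A. R (\<Phi> 0 a) T"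
    and X: "Poly_Mapping.keys X \<subseteq> V m" and cyc: "Dl X = 0"
  shows "\<exists>Y. Poly_Mapping.keys Y \<subseteq> V (Suc m) \<and> Dl Y = X"
proof -
  have step: "\<exists>Y. Poly_Mapping.keys Y \<subseteq> V (Suc m) \<and> Dl Y = mapf (\<Phi> K) X - mapf (\<Phi> 0) X" if "K \<le> N" for K
    using that
  proof (induction K)
    case 0
    then show ?case by (intro exI[of _ 0]) simp
  next
    case (Suc K)
    then obtain Y where Y: "Poly_Mapping.keys Y \<subseteq> V (Suc m)" "Dl Y = mapf (\<Phi> K) X - mapf (\<Phi> 0) X"
      by auto
    have "\<exists>W. Poly_Mapping.keys W \<subseteq> V (Suc m) \<and> Dl W = mapf (\<Phi> (Suc K)) X - mapf (\<Phi> K) X"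
    proof (cases "\<forall>a\<in>A. R (\<Phi> K a) (\<Phi> (Suc K) a)")
      case True
      have "Dl (Hl (\<Phi> K) (\<Phi> (Suc K)) X) = mapf (\<Phi> (Suc K)) X - mapf (\<Phi> K) X"
        using prism[of "\<Phi> K" "\<Phi> (Suc K)" X] cyc by simp
      then show ?thesis using keys_Hl_V[OF mono mono True X] by blast
    next
      case False
      have "K < N" using Suc.prems by simp
      then have F: "\<forall>a\<in>A. R (\<Phi> (Suc K) a) (\<Phi> K a)" using cmp[of K] False by blast
      have "Dl (- Hl (\<Phi> (Suc K)) (\<Phi> K) X) = mapf (\<Phi> (Suc K)) X - mapf (\<Phi> K) X"
        using prism[of "\<Phi> (Suc K)" "\<Phi> K" X] cyc by (simp add: Dl_minus)
      moreover have "Poly_Mapping.keys (- Hl (\<Phi> (Suc K)) (\<Phi> K) X) \<subseteq> V (Suc m)"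
        using keys_Hl_V[OF mono mono F X] by (simp only: keys_minus)
      ultimately show ?thesis by blast
    qed
    then obtain W where W: "Poly_Mapping.keys W \<subseteq> V (Suc m)" "Dl W = mapf (\<Phi> (Suc K)) X - mapf (\<Phi> K) X"
      by blast
    have "Poly_Mapping.keys (Y + W) \<subseteq> V (Suc m)" using Y(1) W(1) keys_add[of Y W] by blast
    moreover have "Dl (Y + W) = mapf (\<Phi> (Suc K)) X - mapf (\<Phi> 0) X"
      using Y W by (simp add: Dl_add)
    ultimately show ?case by blast
  qed
  have mN: "mapf (\<Phi> N) X = X" using mapf_id[OF X idN] .
  obtain Y where Y: "Poly_Mapping.keys Y \<subseteq> V (Suc m)" "Dl Y = X - mapf (\<Phi> 0) X"
    using step[of N] mN by (metis order_refl)
  define Z where "Z = mapf (\<Phi> 0) X"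
  have Zk: "Poly_Mapping.keys Z \<subseteq> V m" unfolding Z_def using keys_mapf_V[OF mono X] .
  have DZ: "Dl Z = 0" unfolding Z_def by (simp add: Dl_mapf cyc)
  have Zl: "Poly_Mapping.keys Z \<subseteq> {L. length L = Suc m}" using Zk unfolding V_def by blast
  have "Dl (snocf T Z) = frag_cmul ((-1)^Suc m) Z"
    using cone[OF Zl, of T] DZ by simp
  moreover have "((-1::int)^Suc m) * (-1)^Suc m = 1" by (induct m) auto
  ultimately have DC: "Dl (frag_cmul ((-1)^Suc m) (snocf T Z)) = Z"
    by (simp add: Dl_cmul)
  have SK: "Poly_Mapping.keys (snocf T Z) \<subseteq> V (Suc m)"
  proof
    fix L assume L: "L \<in> Poly_Mapping.keys (snocf T Z)"
    obtain L0 where L0: "L0 \<in> Poly_Mapping.keys Z" "L = L0 @ [T]"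
      using keys_snocf[of T Z] L by blast
    have "L0 \<in> map (\<Phi> 0) ` Poly_Mapping.keys X" using L0(1) keys_mapf[of "\<Phi> 0" X] unfolding Z_def by blast
    then obtain L1 where L1: "L1 \<in> Poly_Mapping.keys X" "L0 = map (\<Phi> 0) L1" by blast
    have L1A: "set L1 \<subseteq> A" using L1(1) X unfolding V_def by blast
    have cr: "\<forall>x\<in>set L0. \<forall>y\<in>set [T]. R x y"
    proof (intro ballI)
      fix x y assume "x \<in> set L0" "y \<in> set [T]"
      then obtain a where "a \<in> set L1" "x = \<Phi> 0 a" "y = T" using L1(2) by auto
      then show "R x y" using T0 L1A by blast
    qed
    have V0: "L0 \<in> V m" using L0(1) Zk by blast
    have "sorted_wrt R (L0 @ [T])" unfolding sorted_wrt_append using cr V0 unfolding V_def by simp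
    moreover have "set (L0 @ [T]) \<subseteq> A" using V0 T unfolding V_def by simp
    moreover have "length (L0 @ [T]) = Suc (Suc m)" using V0 unfolding V_def by simp
    ultimately show "L \<in> V (Suc m)" using L0(2) unfolding V_def by blast
  qed
  have "Poly_Mapping.keys (Y + frag_cmul ((-1)^Suc m) (snocf T Z)) \<subseteq> V (Suc m)"
    using Y(1) SK keys_add[of Y "frag_cmul ((-1)^Suc m) (snocf T Z)"] keys_cmul[of "(-1)^Suc m" "snocf T Z"]
    by blast
  moreover have "Dl (Y + frag_cmul ((-1)^Suc m) (snocf T Z)) = X"
    using Y DC by (simp add: Dl_add Z_def)
  ultimately show ?thesis by blast
qed

end


lemma composable_nth:
  "composable C c fs \<longleftrightarrow> (\<forall>k<length fs. fs!k \<in> Arr C \<and> Dom C (fs!k) = (c # map (Cod C) fs) ! k)"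
proof (induction fs arbitrary: c)
  case Nil
  then show ?case by simp
next
  case (Cons f fs)
  show ?case
  proof
    assume "composable C c (f # fs)"
    then show "\<forall>k<length (f # fs). (f # fs) ! k \<in> Arr C \<and> Dom C ((f # fs) ! k) = (c # map (Cod C) (f # fs)) ! k"
      using Cons.IH[of "Cod C f"] by (auto simp: nth_Cons split: nat.split)
  next
    assume H: "\<forall>k<length (f # fs). (f # fs) ! k \<in> Arr C \<and> Dom C ((f # fs) ! k) = (c # map (Cod C) (f # fs)) ! k"
    then have "f \<in> Arr C" "Dom C f = c" by (auto dest: spec[of _ 0])
    moreover have "\<forall>k<length fs. fs!k \<in> Arr C \<and> Dom C (fs!k) = (Cod C f # map (Cod C) fs) ! k"
    proof (intro allI impI)
      fix k assume "k < length fs"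
      then show "fs!k \<in> Arr C \<and> Dom C (fs!k) = (Cod C f # map (Cod C) fs) ! k"
        using H[rule_format, of "Suc k"] by simp
    qed
    ultimately show "composable C c (f # fs)" using Cons.IH[of "Cod C f"] by simp
  qed
qed

lemma dl_length: "i < length L \<Longrightarrow> length (dl i L) = length L - 1"
  by (simp add: dl_def)

lemma dl_nth: "i < length L \<Longrightarrow> k < length L - 1 \<Longrightarrow> dl i L ! k = (if k < i then L ! k else L ! Suc k)"
  by (auto simp: dl_def nth_append min_def)

lemma lookup_frag_extend:
  "Poly_Mapping.lookup (frag_extend f Z) u = (\<Sum>L\<in>Poly_Mapping.keys Z. Poly_Mapping.lookup Z L * Poly_Mapping.lookup (f L) u)"
  by (simp add: frag_extend_def lookup_sum)

lemma lookup_bd: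
  "Poly_Mapping.lookup (bd L) u = (\<Sum>j<length L. (-1)^j * (if u = dl j L then 1 else 0))"
  by (simp add: bd_def lookup_sum)

locale thin_cat =
  fixes C :: "('o,'m) cat"
  assumes dc: "f \<in> Arr C \<Longrightarrow> Dom C f \<in> Obj C \<and> Cod C f \<in> Obj C"
  and comp: "f \<in> Arr C \<Longrightarrow> g \<in> Arr C \<Longrightarrow> Dom C g = Cod C f \<Longrightarrow>
      Comp C g f \<in> Arr C \<and> Dom C (Comp C g f) = Dom C f \<and> Cod C (Comp C g f) = Cod C g"
  and thin: "f \<in> Arr C \<Longrightarrow> g \<in> Arr C \<Longrightarrow> Dom C f = Dom C g \<Longrightarrow> Cod C f = Cod C g \<Longrightarrow> f = g"
  and ide: "a \<in> Obj C \<Longrightarrow> \<exists>f\<in>Arr C. Dom C f = a \<and> Cod C f = a"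
begin

definition RC :: "'o \<Rightarrow> 'o \<Rightarrow> bool" where
  "RC a b \<longleftrightarrow> (\<exists>f\<in>Arr C. Dom C f = a \<and> Cod C f = b)"

lemma RC_trans: "RC a b \<Longrightarrow> RC b c \<Longrightarrow> RC a c"
  unfolding RC_def by (metis comp)

sublocale preo RC "Obj C"
  by unfold_locales (rule RC_trans)

lemma transp_RC: "transp RC"
  by (meson RC_trans transpI)

definition mor :: "'o \<Rightarrow> 'o \<Rightarrow> 'm" where
  "mor a b = (SOME f. f \<in> Arr C \<and> Dom C f = a \<and> Cod C f = b)"

lemma mor: "RC a b \<Longrightarrow> mor a b \<in> Arr C \<and> Dom C (mor a b) = a \<and> Cod C (mor a b) = b"
  unfolding RC_def mor_def by (rule someI_ex) blast

lemma mor_eq: "f \<in> Arr C \<Longrightarrow> mor (Dom C f) (Cod C f) = f"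
  using mor[of "Dom C f" "Cod C f"] thin[of f] by (metis RC_def)

definition verts :: "'o \<times> 'm list \<Rightarrow> 'o list" where
  "verts s = fst s # map (Cod C) (snd s)"

definition mk :: "'o list \<Rightarrow> 'o \<times> 'm list" where
  "mk L = (hd L, map (\<lambda>k. mor (L ! k) (L ! Suc k)) [0..<length L - 1])"

lemma V_RC: "L \<in> V m \<Longrightarrow> k < m \<Longrightarrow> RC (L ! k) (L ! Suc k)"
  unfolding V_def by (auto simp: sorted_wrt_iff_nth_less)

lemma nerve_verts:
  assumes "s \<in> nerve C m"
  shows "verts s \<in> V m" "mk (verts s) = s"
proof -
  obtain c fs where s: "s = (c, fs)" "c \<in> Obj C" "length fs = m" "composable C c fs"
    using assms unfolding nerve_def by auto
  have F: "\<And>k. k < m \<Longrightarrow> fs!k \<in> Arr C \<and> Dom C (fs!k) = (c # map (Cod C) fs) ! k"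
    using s composable_nth by metis
  have vs: "verts s = c # map (Cod C) fs" by (simp add: verts_def s)
  have len: "length (verts s) = Suc m" using s by (simp add: verts_def)
  have "set (verts s) \<subseteq> Obj C"
  proof
    fix x assume "x \<in> set (verts s)"
    then have "x = c \<or> (\<exists>f\<in>set fs. x = Cod C f)" using vs by auto
    then have "x = c \<or> (\<exists>k<m. x = Cod C (fs!k))" using s(3) by (auto simp: in_set_conv_nth)
    then show "x \<in> Obj C" using s(2) F dc by blast
  qed
  moreover have "sorted_wrt RC (verts s)"
    unfolding sorted_wrt_iff_nth_Suc_transp[OF transp_RC]
  proof (intro allI impI)
    fix i assume "Suc i < length (verts s)"
    then have i: "i < m" using len by simp
    then show "RC (verts s ! i) (verts s ! Suc i)"
      using F[OF i] i s(3) unfolding RC_def vs by (intro bexI[of _ "fs!i"]) auto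
  qed
  ultimately show "verts s \<in> V m" using len by (simp add: V_def)
  have "map (\<lambda>k. mor (verts s ! k) (verts s ! Suc k)) [0..<length (verts s) - 1] = fs"
  proof (rule nth_equalityI)
    show "length (map (\<lambda>k. mor (verts s ! k) (verts s ! Suc k)) [0..<length (verts s) - 1]) = length fs"
      using len s by simp
    fix i assume "i < length (map (\<lambda>k. mor (verts s ! k) (verts s ! Suc k)) [0..<length (verts s) - 1])"
    then have i: "i < m" using len by simp
    then have "verts s ! i = Dom C (fs ! i)" "verts s ! Suc i = Cod C (fs ! i)"
      using F[OF i] vs s by auto
    then show "map (\<lambda>k. mor (verts s ! k) (verts s ! Suc k)) [0..<length (verts s) - 1] ! i = fs ! i"
      using i len mor_eq[of "fs!i"] F[OF i] by (simp del: nth_Cons)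
  qed
  then show "mk (verts s) = s" unfolding mk_def using s vs by simp
qed

lemma mk_snd_nth: "k < length L - 1 \<Longrightarrow> snd (mk L) ! k = mor (L ! k) (L ! Suc k)"
  by (simp add: mk_def)

lemma mk_snd_length: "length (snd (mk L)) = length L - 1"
  by (simp add: mk_def)

lemma V_mk:
  assumes L: "L \<in> V m"
  shows "mk L \<in> nerve C m" "verts (mk L) = L"
proof -
  have len: "length L = Suc m" and LA: "set L \<subseteq> Obj C" using L by (auto simp: V_def)
  have M: "\<And>k. k < m \<Longrightarrow> snd (mk L) ! k \<in> Arr C \<and> Dom C (snd (mk L) ! k) = L ! k \<and> Cod C (snd (mk L) ! k) = L ! Suc k"
    using mor V_RC[OF L] mk_snd_nth len by simp
  have vl: "verts (mk L) = L"
  proof (rule nth_equalityI)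
    show "length (verts (mk L)) = length L" using len by (simp add: verts_def mk_snd_length)
    fix i assume "i < length (verts (mk L))"
    then have i: "i < Suc m" using len by (simp add: verts_def mk_snd_length)
    show "verts (mk L) ! i = L ! i"
    proof (cases i)
      case 0
      then show ?thesis using len by (cases L) (simp_all add: verts_def mk_def)
    next
      case (Suc j)
      then show ?thesis using i M[of j] len by (simp add: verts_def mk_snd_length)
    qed
  qed
  then show "verts (mk L) = L" .
  have "hd L \<in> Obj C" using LA len by (metis hd_in_set length_0_conv nat.distinct(1) subsetD)
  moreover have "composable C (hd L) (snd (mk L))"
    unfolding composable_nth
  proof (intro allI impI)
    fix k assume k: "k < length (snd (mk L))"
    then have km: "k < m" using len by (simp add: mk_snd_length)
    have "(hd L # map (Cod C) (snd (mk L))) ! k = L ! k"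
      using vl km len by (metis fst_conv verts_def mk_def)
    then show "snd (mk L) ! k \<in> Arr C \<and> Dom C (snd (mk L) ! k) = (hd L # map (Cod C) (snd (mk L))) ! k"
      using M[OF km] by simp
  qed
  ultimately show "mk L \<in> nerve C m" using len
    by (simp add: nerve_def mk_snd_length) (simp add: mk_def)
qed

lemma mk_eqI:
  assumes "length L' = Suc k" "hd L' = a" "length ms = k" "\<And>j. j < k \<Longrightarrow> ms ! j = mor (L' ! j) (L' ! Suc j)"
  shows "mk L' = (a, ms)"
proof -
  have "map (\<lambda>k. mor (L' ! k) (L' ! Suc k)) [0..<length L' - 1] = ms"
    by (rule nth_equalityI) (use assms in auto)
  then show ?thesis unfolding mk_def using assms by simp
qed

lemma face_mk:
  assumes L: "L \<in> V (Suc m)" and i: "i \<le> Suc m"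
  shows "face C i (mk L) = mk (dl i L)"
proof -
  define fs where "fs = snd (mk L)"
  have len: "length L = Suc (Suc m)" using L by (simp add: V_def)
  have mkL: "mk L = (hd L, fs)" unfolding fs_def by (simp add: mk_def)
  have lfs: "length fs = Suc m" unfolding fs_def by (simp add: mk_snd_length len)
  have fsn: "\<And>j. j < Suc m \<Longrightarrow> fs ! j = mor (L ! j) (L ! Suc j)"
    unfolding fs_def using len by (simp add: mk_snd_nth)
  have M: "\<And>j. j < Suc m \<Longrightarrow> fs ! j \<in> Arr C \<and> Dom C (fs ! j) = L ! j \<and> Cod C (fs ! j) = L ! Suc j"
    using fsn mor V_RC[OF L] by simp
  have ldl: "length (dl i L) = Suc m" using len i by (simp add: dl_length)
  have dln: "\<And>k. k < Suc m \<Longrightarrow> dl i L ! k = (if k < i then L ! k else L ! Suc k)"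
    using dl_nth[of i L] len i by simp
  have hdL: "hd L = L ! 0" using len by (cases L) auto
  show ?thesis
  proof (cases "i = 0")
    case True
    have f: "face C i (mk L) = (Cod C (hd fs), tl fs)"
      using True mkL by (simp add: face_def)
    have "hd fs = fs ! 0" using lfs by (cases fs) auto
    then have "Cod C (hd fs) = L ! 1" using M[of 0] by simp
    moreover have "hd (dl i L) = L ! 1" using dln[of 0] True ldl by (cases "dl i L") auto
    ultimately show ?thesis unfolding f
      by (intro mk_eqI[symmetric, where k=m]) (use ldl lfs fsn dln True in \<open>auto simp: nth_tl\<close>)
  next
    case False
    note i0 = False
    show ?thesis
    proof (cases "i = Suc m")
      case True
      have f: "face C i (mk L) = (hd L, butlast fs)"
        using True False mkL lfs by (simp add: face_def)
      have "hd (dl i L) = L ! 0" using dln[of 0] False ldl by (cases "dl i L") auto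
      then show ?thesis unfolding f
        by (intro mk_eqI[symmetric, where k=m]) (use ldl lfs fsn dln True hdL in \<open>auto simp: nth_butlast\<close>)
    next
      case False
      then have ilt: "0 < i" "i < Suc m" using i i0 by auto
      have f: "face C i (mk L) = (hd L, take (i - 1) fs @ [Comp C (fs ! i) (fs ! (i - 1))] @ drop (i + 1) fs)"
        using False i0 mkL lfs by (simp add: face_def)
      have hd: "hd (dl i L) = L ! 0" using dln[of 0] ilt ldl by (cases "dl i L") auto
      have cmp: "Comp C (fs ! i) (fs ! (i - 1)) = mor (L ! (i - 1)) (L ! Suc i)"
      proof -
        have a: "fs ! (i-1) \<in> Arr C" "Dom C (fs ! (i-1)) = L ! (i-1)" "Cod C (fs ! (i-1)) = L ! i"
          using M[of "i-1"] ilt by auto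
        have b: "fs ! i \<in> Arr C" "Dom C (fs ! i) = L ! i" "Cod C (fs ! i) = L ! Suc i"
          using M[of i] ilt by auto
        have c: "Comp C (fs ! i) (fs ! (i - 1)) \<in> Arr C" "Dom C (Comp C (fs ! i) (fs ! (i - 1))) = L ! (i-1)"
          "Cod C (Comp C (fs ! i) (fs ! (i - 1))) = L ! Suc i"
          using comp[of "fs ! (i-1)" "fs ! i"] a b by auto
        then have "RC (L ! (i - 1)) (L ! Suc i)" unfolding RC_def by blast
        then show ?thesis using c mor thin by metis
      qed
      show ?thesis unfolding f
      proof (intro mk_eqI[symmetric, where k=m])
        show "length (dl i L) = Suc m" by (rule ldl)
        show "hd (dl i L) = hd L" using hd hdL by simp
        show "length (take (i - 1) fs @ [Comp C (fs ! i) (fs ! (i - 1))] @ drop (i + 1) fs) = m"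
          using lfs ilt by simp
        fix j assume j: "j < m"
        consider "j < i - 1" | "j = i - 1" | "j > i - 1" by linarith
        then show "(take (i - 1) fs @ [Comp C (fs ! i) (fs ! (i - 1))] @ drop (i + 1) fs) ! j
             = mor (dl i L ! j) (dl i L ! Suc j)"
        proof cases
          case 1
          then have "j < i" "Suc j < i" by auto
          then show ?thesis using 1 j ilt lfs fsn dln by (simp add: nth_append)
        next
          case 2
          then show ?thesis using j ilt lfs fsn dln cmp by (simp add: nth_append)
        next
          case 3
          then have "(take (i - 1) fs @ [Comp C (fs ! i) (fs ! (i - 1))] @ drop (i + 1) fs) ! j = fs ! Suc j"
            using j ilt lfs by (simp add: nth_append)
          moreover have "\<not> j < i" "\<not> Suc j < i" using 3 ilt by auto
          ultimately show ?thesis using j ilt fsn dln by simp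
        qed
      qed
    qed
  qed
qed

definition pull :: "nat \<Rightarrow> ('o list \<Rightarrow>\<^sub>0 int) \<Rightarrow> ('o \<times> 'm list \<Rightarrow> int)" where
  "pull m Z = (\<lambda>s. if s \<in> nerve C m then Poly_Mapping.lookup Z (verts s) else 0)"

lemma pull_mk: "L \<in> V m \<Longrightarrow> pull m Z (mk L) = Poly_Mapping.lookup Z L"
  using V_mk[of L m] by (simp add: pull_def)

lemma supp_pull:
  assumes "Poly_Mapping.keys Z \<subseteq> V m"
  shows "{s. pull m Z s \<noteq> 0} = mk ` Poly_Mapping.keys Z"
proof
  show "{s. pull m Z s \<noteq> 0} \<subseteq> mk ` Poly_Mapping.keys Z"
  proof
    fix s assume "s \<in> {s. pull m Z s \<noteq> 0}"
    then have "s \<in> nerve C m" "Poly_Mapping.lookup Z (verts s) \<noteq> 0"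
      by (auto simp: pull_def split: if_splits)
    then show "s \<in> mk ` Poly_Mapping.keys Z"
      using nerve_verts(2)[of s m] by (metis image_eqI in_keys_iff)
  qed
  show "mk ` Poly_Mapping.keys Z \<subseteq> {s. pull m Z s \<noteq> 0}"
    using assms pull_mk by (auto simp: in_keys_iff)
qed

lemma pull_chains:
  assumes "Poly_Mapping.keys Z \<subseteq> V m"
  shows "pull m Z \<in> chains C m"
proof -
  have "{s. pull m Z s \<noteq> 0} \<subseteq> nerve C m"
    by (auto simp: pull_def split: if_splits)
  then show ?thesis unfolding chains_def using supp_pull[OF assms] by simp
qed

lemma chains_pull:
  assumes x: "x \<in> chains C m"
  shows "\<exists>Z. Poly_Mapping.keys Z \<subseteq> V m \<and> pull m Z = x"
proof -
  define g where "g = (\<lambda>L. if L \<in> V m then x (mk L) else 0)"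
  have xs: "finite {s. x s \<noteq> 0}" "{s. x s \<noteq> 0} \<subseteq> nerve C m"
    using x by (auto simp: chains_def)
  have "{L. g L \<noteq> 0} \<subseteq> verts ` {s. x s \<noteq> 0}"
  proof
    fix L assume "L \<in> {L. g L \<noteq> 0}"
    then have "L \<in> V m" "x (mk L) \<noteq> 0" by (auto simp: g_def split: if_splits)
    then show "L \<in> verts ` {s. x s \<noteq> 0}" using V_mk(2) by (metis (mono_tags, lifting) image_eqI mem_Collect_eq)
  qed
  then have fin: "finite {L. g L \<noteq> 0}" using xs(1) finite_surj by blast
  define Z where "Z = Abs_poly_mapping g"
  have lZ: "Poly_Mapping.lookup Z = g" unfolding Z_def using fin by simp
  have "Poly_Mapping.keys Z \<subseteq> V m"
    by (auto simp: in_keys_iff lZ g_def split: if_splits)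
  moreover have "pull m Z = x"
  proof
    fix s show "pull m Z s = x s"
    proof (cases "s \<in> nerve C m")
      case True
      then show ?thesis using nerve_verts[OF True] by (simp add: pull_def lZ g_def)
    next
      case False
      then show ?thesis using xs(2) by (auto simp: pull_def)
    qed
  qed
  ultimately show ?thesis by blast
qed

lemma pull_zero:
  assumes "Poly_Mapping.keys Z \<subseteq> V m" "pull m Z = (\<lambda>_. 0)"
  shows "Z = 0"
proof -
  have "Poly_Mapping.keys Z = {}"
    using supp_pull[OF assms(1)] assms(2) by auto
  then show ?thesis by simp
qed

lemma inj_mk: "inj_on mk (V m)"
  by (metis V_mk(2) inj_on_inverseI)

lemma boundary_pull:
  assumes Z: "Poly_Mapping.keys Z \<subseteq> V (Suc m)"
  shows "boundary C (Suc m) (pull (Suc m) Z) = pull m (Dl Z)"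
proof
  fix t
  have "boundary C (Suc m) (pull (Suc m) Z) t
     = (\<Sum>s\<in>mk ` Poly_Mapping.keys Z. \<Sum>i\<in>{0..Suc m}. if face C i s = t then (-1)^i * pull (Suc m) Z s else 0)"
    unfolding boundary_def supp_pull[OF Z] ..
  also have "\<dots> = (\<Sum>L\<in>Poly_Mapping.keys Z. \<Sum>i\<in>{0..Suc m}. if face C i (mk L) = t then (-1)^i * pull (Suc m) Z (mk L) else 0)"
    by (rule sum.reindex_cong[where l=mk]) (use inj_on_subset[OF inj_mk Z] in auto)
  also have "\<dots> = (\<Sum>L\<in>Poly_Mapping.keys Z. \<Sum>i\<in>{0..Suc m}. if mk (dl i L) = t then (-1)^i * Poly_Mapping.lookup Z L else 0)"
  proof (rule sum.cong[OF refl], rule sum.cong[OF refl])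
    fix L i assume "L \<in> Poly_Mapping.keys Z" "i \<in> {0..Suc m}"
    then show "(if face C i (mk L) = t then (-1)^i * pull (Suc m) Z (mk L) else 0)
        = (if mk (dl i L) = t then (-1)^i * Poly_Mapping.lookup Z L else 0)"
      using Z face_mk[of L m i] pull_mk[of L "Suc m" Z] by auto
  qed
  also have "\<dots> = pull m (Dl Z) t"
  proof (cases "t \<in> nerve C m")
    case True
    have "pull m (Dl Z) t = (\<Sum>L\<in>Poly_Mapping.keys Z. Poly_Mapping.lookup Z L *
        (\<Sum>j<length L. (-1)^j * (if verts t = dl j L then 1 else 0)))"
      using True by (simp add: pull_def Dl_def lookup_frag_extend lookup_bd)
    also have "\<dots> = (\<Sum>L\<in>Poly_Mapping.keys Z. \<Sum>i\<in>{0..Suc m}. if mk (dl i L) = t then (-1)^i * Poly_Mapping.lookup Z L else 0)"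
    proof (rule sum.cong[OF refl])
      fix L assume L: "L \<in> Poly_Mapping.keys Z"
      then have LV: "L \<in> V (Suc m)" using Z by blast
      then have len: "length L = Suc (Suc m)" by (simp add: V_def)
      have eq: "(mk (dl i L) = t) = (verts t = dl i L)" if "i \<in> {0..Suc m}" for i
      proof -
        have "dl i L \<in> V m" using dl_V[OF LV] that len by simp
        then show ?thesis using V_mk(2)[of "dl i L" m] nerve_verts(2)[OF True] by metis
      qed
      have r: "{..<length L} = {0..Suc m}" using len by auto
      have "Poly_Mapping.lookup Z L * (\<Sum>j<length L. (-1)^j * (if verts t = dl j L then 1 else 0))
          = (\<Sum>i\<in>{0..Suc m}. Poly_Mapping.lookup Z L * ((-1)^i * (if verts t = dl i L then 1 else 0)))"
        by (simp only: r sum_distrib_left)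
      also have "\<dots> = (\<Sum>i\<in>{0..Suc m}. if mk (dl i L) = t then (-1)^i * Poly_Mapping.lookup Z L else 0)"
        by (rule sum.cong[OF refl]) (use eq in auto)
      finally show "Poly_Mapping.lookup Z L * (\<Sum>j<length L. (-1)^j * (if verts t = dl j L then 1 else 0))
          = (\<Sum>i\<in>{0..Suc m}. if mk (dl i L) = t then (-1)^i * Poly_Mapping.lookup Z L else 0)" .
    qed
    finally show ?thesis by simp
  next
    case False
    have "mk (dl i L) \<noteq> t" if "L \<in> Poly_Mapping.keys Z" "i \<in> {0..Suc m}" for L i
    proof -
      have LV: "L \<in> V (Suc m)" using Z that by blast
      then have "dl i L \<in> V m" using dl_V[OF LV] that by (simp add: V_def)
      then show ?thesis using V_mk(1) False by blast
    qed
    then show ?thesis using False by (simp add: pull_def)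
  qed
  finally show "boundary C (Suc m) (pull (Suc m) Z) t = pull m (Dl Z) t" .
qed

theorem acyclic:
  assumes mono: "\<And>k. monof (\<Phi> k)"
    and cmp: "\<And>k. k < N \<Longrightarrow> (\<forall>a\<in>Obj C. RC (\<Phi> k a) (\<Phi> (Suc k) a)) \<or> (\<forall>a\<in>Obj C. RC (\<Phi> (Suc k) a) (\<Phi> k a))"
    and idN: "\<forall>a\<in>Obj C. \<Phi> N a = a" and T: "T \<in> Obj C" and T0: "\<forall>a\<in>Obj C. RC (\<Phi> 0 a) T"
  shows "connected_cat C \<and> (\<forall>q>0. colim_Z_vanishes C q)"
proof
  define E where "E = (\<lambda>a b. \<exists>f\<in>Arr C. (Dom C f = a \<and> Cod C f = b) \<or> (Dom C f = b \<and> Cod C f = a))"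
  have E1: "RC a b \<Longrightarrow> E a b" "RC a b \<Longrightarrow> E b a" for a b unfolding E_def RC_def by blast+
  have Esym: "E\<^sup>*\<^sup>* b a" if "E\<^sup>*\<^sup>* a b" for a b
    using that
  proof (induction rule: rtranclp.induct)
    case (rtrancl_into_rtrancl a b c)
    have "E c b" using rtrancl_into_rtrancl(2) unfolding E_def by blast
    then show ?case using rtrancl_into_rtrancl(3) by (rule converse_rtranclp_into_rtranclp)
  qed simp
  have toT: "\<forall>a\<in>Obj C. E\<^sup>*\<^sup>* (\<Phi> K a) T" if "K \<le> N" for K
    using that
  proof (induction K)
    case 0
    then show ?case using T0 E1 by blast
  next
    case (Suc K)
    show ?case
    proof
      fix a assume a: "a \<in> Obj C"
      have "K < N" using Suc.prems by simp
      then have "E (\<Phi> (Suc K) a) (\<Phi> K a)" using cmp[of K] a E1 by blast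
      moreover have "E\<^sup>*\<^sup>* (\<Phi> K a) T" using Suc a by simp
      ultimately show "E\<^sup>*\<^sup>* (\<Phi> (Suc K) a) T" by (rule converse_rtranclp_into_rtranclp)
    qed
  qed
  have "\<forall>a\<in>Obj C. E\<^sup>*\<^sup>* a T" using toT[of N] idN by simp
  then have "\<forall>x\<in>Obj C. \<forall>y\<in>Obj C. E\<^sup>*\<^sup>* x y"
    using Esym by (meson rtranclp_trans)
  then show "connected_cat C" unfolding connected_cat_def E_def using T by blast
next
  show "\<forall>q>0. colim_Z_vanishes C q"
  proof (intro allI impI)
    fix q :: nat assume "q > 0"
    then obtain m where q: "q = Suc m" by (cases q) auto
    show "colim_Z_vanishes C q"
      unfolding colim_Z_vanishes_def
    proof (intro ballI impI)
      fix x assume x: "x \<in> chains C q" and bx: "boundary C q x = (\<lambda>_. 0)"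
      obtain Z where Z: "Poly_Mapping.keys Z \<subseteq> V q" "pull q Z = x"
        using chains_pull[OF x] by blast
      have "pull m (Dl Z) = (\<lambda>_. 0)" using boundary_pull[of Z m] Z bx q by simp
      then have DZ: "Dl Z = 0" using pull_zero keys_Dl_V Z(1) q by metis
      obtain Y where Y: "Poly_Mapping.keys Y \<subseteq> V (Suc q)" "Dl Y = Z"
        using contract[OF mono cmp idN T T0 Z(1) DZ] by blast
      have "pull (Suc q) Y \<in> chains C (Suc q)" using pull_chains[OF Y(1)] .
      moreover have "boundary C (Suc q) (pull (Suc q) Y) = x"
        using boundary_pull[OF Y(1)] Y(2) Z(2) by simp
      ultimately show "\<exists>y\<in>chains C (Suc q). boundary C (Suc q) y = x" by blast
    qed
  qed
qed

end


abbreviation KC :: "nat \<Rightarrow> (nat \<Rightarrow> nat) \<Rightarrow> _" where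
  "KC n d \<equiv> comma (full_subcat (FCat (Nmon n)) (Tset n)) (FCat (Nmon n)) id id d"

definition carr :: "nat \<Rightarrow> (nat \<Rightarrow> nat) set" where
  "carr n = {a. \<forall>i\<ge>n. a i = 0}"

lemma Tset_iff: "c \<in> Tset n \<longleftrightarrow> (\<forall>j. c j \<le> 1) \<and> (\<forall>j\<ge>n. c j = 0)"
proof
  assume "c \<in> Tset n"
  then show "(\<forall>j. c j \<le> 1) \<and> (\<forall>j\<ge>n. c j = 0)" by (auto simp: Tset_def)
next
  assume H: "(\<forall>j. c j \<le> 1) \<and> (\<forall>j\<ge>n. c j = 0)"
  have "c = (\<lambda>j. if j \<in> {j. c j = 1} then 1 else 0)"
  proof
    fix j show "c j = (if j \<in> {j. c j = 1} then 1 else 0)" using H[THEN conjunct1, rule_format, of j] by auto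
  qed
  moreover have "{j. c j = 1} \<subseteq> {..<n}" using H by (auto simp: not_less[symmetric])
  ultimately show "c \<in> Tset n" unfolding Tset_def by blast
qed

lemma Obj_K: "(c, (b, f, g)) \<in> Obj (KC n d) \<longleftrightarrow>
   c \<in> Tset n \<and> b = c \<and> f \<in> carr n \<and> g \<in> carr n \<and> (\<forall>j. d j = g j + c j + f j)"
  by (auto simp: comma_def FCat_def full_subcat_def Nmon_def Tset_iff carr_def fun_eq_iff)

lemma Arr_K: "((a,h,k), (c1,b1,f1,g1), (c2,b2,f2,g2)) \<in> Arr (KC n d) \<longleftrightarrow>
   (c1,b1,f1,g1) \<in> Obj (KC n d) \<and> (c2,b2,f2,g2) \<in> Obj (KC n d) \<and> a \<in> carr n \<and> h \<in> carr n \<and> k \<in> carr n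
   \<and> a = c1 \<and> (\<forall>j. k j + a j + h j = c2 j) \<and> (\<forall>j. h j + f2 j = f1 j \<and> g2 j + k j = g1 j) \<and> a = b1"
  unfolding Obj_K by (auto simp: comma_def FCat_def full_subcat_def Nmon_def Let_def carr_def fun_eq_iff Tset_iff)

lemma Dom_K: "Dom (KC n d) (F, x, y) = x" by (simp add: comma_def Let_def)
lemma Cod_K: "Cod (KC n d) (F, x, y) = y" by (simp add: comma_def Let_def)
lemma Comp_K: "Comp (KC n d) (G, y, z) (F, x, y') = (Comp (FCat (Nmon n)) G F, x, z)"
  by (simp add: comma_def Let_def full_subcat_def)
lemma Comp_F: "Comp (FCat (Nmon n)) (b, f2, g2) (a, f1, g1) = (a, \<lambda>j. f1 j + f2 j, \<lambda>j. g2 j + g1 j)"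
  by (simp add: FCat_def Nmon_def)

lemma arr_split: "\<exists>a h k c1 b1 f1 g1 c2 b2 f2 g2. F = ((a,h,k), (c1,b1,f1,g1), (c2,b2,f2,g2))"
  by (cases F) (metis prod.exhaust)

lemma thin_K: "thin_cat (KC n d)"
proof
  fix f assume "f \<in> Arr (KC n d)"
  then show "Dom (KC n d) f \<in> Obj (KC n d) \<and> Cod (KC n d) f \<in> Obj (KC n d)"
    by (auto simp: comma_def Let_def)
next
  fix f g assume A: "f \<in> Arr (KC n d)" "g \<in> Arr (KC n d)" "Dom (KC n d) g = Cod (KC n d) f"
  obtain a h k c1 b1 f1 g1 c2 b2 f2 g2 where f: "f = ((a,h,k), (c1,b1,f1,g1), (c2,b2,f2,g2))"
    using arr_split[of f] by blast
  obtain a' h' k' c2' b2' f2' g2' c3 b3 f3 g3 where g: "g = ((a',h',k'), (c2',b2',f2',g2'), (c3,b3,f3,g3))"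
    using arr_split[of g] by blast
  have e: "c2' = c2" "b2' = b2" "f2' = f2" "g2' = g2" using A(3) f g by (simp_all add: Dom_K Cod_K)
  have Af: "(c1,b1,f1,g1) \<in> Obj (KC n d)" "(c2,b2,f2,g2) \<in> Obj (KC n d)" "a \<in> carr n" "h \<in> carr n" "k \<in> carr n"
    "a = c1" "\<forall>j. k j + a j + h j = c2 j" "\<forall>j. h j + f2 j = f1 j \<and> g2 j + k j = g1 j" "a = b1"
    using A(1) unfolding f Arr_K by blast+
  have Ag: "(c3,b3,f3,g3) \<in> Obj (KC n d)" "a' \<in> carr n" "h' \<in> carr n" "k' \<in> carr n"
    "a' = c2" "\<forall>j. k' j + a' j + h' j = c3 j" "\<forall>j. h' j + f3 j = f2 j \<and> g3 j + k' j = g2 j" "a' = b2"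
    using A(2) unfolding g e Arr_K by blast+
  have "((a, \<lambda>j. h j + h' j, \<lambda>j. k' j + k j), (c1,b1,f1,g1), (c3,b3,f3,g3)) \<in> Arr (KC n d)"
    unfolding Arr_K
  proof (intro conjI allI)
    show "(\<lambda>j. h j + h' j) \<in> carr n" "(\<lambda>j. k' j + k j) \<in> carr n"
      using Af Ag by (auto simp: carr_def)
    fix j
    show "(k' j + k j) + a j + (h j + h' j) = c3 j" using Af(7) Ag(6) Ag(5) by (metis add.assoc add.commute)
    show "h j + h' j + f3 j = f1 j" using Af(8) Ag(7) by (metis add.assoc)
    show "g3 j + (k' j + k j) = g1 j" using Af(8) Ag(7) by (metis add.assoc)
  qed (use Af Ag in auto)
  then show "Comp (KC n d) g f \<in> Arr (KC n d) \<and> Dom (KC n d) (Comp (KC n d) g f) = Dom (KC n d) f \<and>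
      Cod (KC n d) (Comp (KC n d) g f) = Cod (KC n d) g"
    unfolding f g e by (simp add: Comp_K Comp_F Dom_K Cod_K)
next
  fix f g assume A: "f \<in> Arr (KC n d)" "g \<in> Arr (KC n d)" "Dom (KC n d) f = Dom (KC n d) g"
     "Cod (KC n d) f = Cod (KC n d) g"
  obtain a h k c1 b1 f1 g1 c2 b2 f2 g2 where f: "f = ((a,h,k), (c1,b1,f1,g1), (c2,b2,f2,g2))"
    using arr_split[of f] by blast
  obtain a' h' k' c1' b1' f1' g1' c2' b2' f2' g2' where g: "g = ((a',h',k'), (c1',b1',f1',g1'), (c2',b2',f2',g2'))"
    using arr_split[of g] by blast
  have e: "c1' = c1" "b1' = b1" "f1' = f1" "g1' = g1" "c2' = c2" "b2' = b2" "f2' = f2" "g2' = g2"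
    using A(3,4) f g by (simp_all add: Dom_K Cod_K)
  have Af: "a = c1" "\<forall>j. h j + f2 j = f1 j \<and> g2 j + k j = g1 j"
    using A(1) unfolding f Arr_K by blast+
  have Ag: "a' = c1" "\<forall>j. h' j + f2 j = f1 j \<and> g2 j + k' j = g1 j"
    using A(2) unfolding g e Arr_K by blast+
  have "h = h'" "k = k'" using Af Ag by (auto simp: fun_eq_iff) (metis add_right_cancel, metis add_left_cancel)
  then show "f = g" unfolding f g e using Af Ag by simp
next
  fix x assume x: "x \<in> Obj (KC n d)"
  obtain c b f g where xe: "x = (c, b, f, g)" by (metis prod.exhaust)
  have "b = c" "c \<in> Tset n" using x unfolding xe Obj_K by auto
  then have "((c, \<lambda>_. 0, \<lambda>_. 0), x, x) \<in> Arr (KC n d)"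
    using x unfolding xe Arr_K by (auto simp: carr_def Tset_iff)
  then show "\<exists>f\<in>Arr (KC n d). Dom (KC n d) f = x \<and> Cod (KC n d) f = x"
    by (intro bexI[of _ "((c, \<lambda>_. 0, \<lambda>_. 0), x, x)"]) (simp_all only: Dom_K Cod_K)
qed

lemma RC_K:
  assumes x: "(c1,b1,f1,g1) \<in> Obj (KC n d)" and y: "(c2,b2,f2,g2) \<in> Obj (KC n d)"
  shows "thin_cat.RC (KC n d) (c1,b1,f1,g1) (c2,b2,f2,g2) \<longleftrightarrow> (\<forall>j. f2 j \<le> f1 j \<and> g2 j \<le> g1 j)"
proof
  assume "thin_cat.RC (KC n d) (c1,b1,f1,g1) (c2,b2,f2,g2)"
  then obtain F where F: "F \<in> Arr (KC n d)" "Dom (KC n d) F = (c1,b1,f1,g1)" "Cod (KC n d) F = (c2,b2,f2,g2)"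
    unfolding thin_cat.RC_def[OF thin_K] by blast
  obtain a h k c1' b1' f1' g1' c2' b2' f2' g2' where f: "F = ((a,h,k), (c1',b1',f1',g1'), (c2',b2',f2',g2'))"
    using arr_split[of F] by blast
  have "((a,h,k), (c1,b1,f1,g1), (c2,b2,f2,g2)) \<in> Arr (KC n d)" using F f by (simp add: Dom_K Cod_K)
  then have "\<forall>j. h j + f2 j = f1 j \<and> g2 j + k j = g1 j" unfolding Arr_K by blast
  then show "\<forall>j. f2 j \<le> f1 j \<and> g2 j \<le> g1 j" by (metis le_add2 le_add1)
next
  assume le: "\<forall>j. f2 j \<le> f1 j \<and> g2 j \<le> g1 j"
  have X: "c1 \<in> Tset n" "b1 = c1" "f1 \<in> carr n" "g1 \<in> carr n" "\<forall>j. d j = g1 j + c1 j + f1 j"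
    using x unfolding Obj_K by blast+
  have Y: "c2 \<in> Tset n" "b2 = c2" "f2 \<in> carr n" "g2 \<in> carr n" "\<forall>j. d j = g2 j + c2 j + f2 j"
    using y unfolding Obj_K by blast+
  have "((c1, \<lambda>j. f1 j - f2 j, \<lambda>j. g1 j - g2 j), (c1,b1,f1,g1), (c2,b2,f2,g2)) \<in> Arr (KC n d)"
    unfolding Arr_K
  proof (intro conjI allI)
    show "c1 \<in> carr n" using X(1) by (simp add: Tset_iff carr_def)
    show "(\<lambda>j. f1 j - f2 j) \<in> carr n" "(\<lambda>j. g1 j - g2 j) \<in> carr n" using X(3,4) by (auto simp: carr_def)
    fix j
    have "g1 j + c1 j + f1 j = g2 j + c2 j + f2 j" "f2 j \<le> f1 j" "g2 j \<le> g1 j"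
      using X(5) Y(5) le by metis+
    then show "g1 j - g2 j + c1 j + (f1 j - f2 j) = c2 j" by arith
    show "f1 j - f2 j + f2 j = f1 j" using le by simp
    show "g2 j + (g1 j - g2 j) = g1 j" using le by simp
  qed (use x y X in auto)
  then show "thin_cat.RC (KC n d) (c1,b1,f1,g1) (c2,b2,f2,g2)"
    unfolding thin_cat.RC_def[OF thin_K]
    by (intro bexI[of _ "((c1, \<lambda>j. f1 j - f2 j, \<lambda>j. g1 j - g2 j), (c1,b1,f1,g1), (c2,b2,f2,g2))"])
       (simp_all only: Dom_K Cod_K simp_thms)
qed

lemma ar1:
  fixes c f K k r :: nat
  assumes "c \<le> 1" "K = 2*k + r" "r \<le> 1"
  shows "(if 2*f+c \<le> K then c else r) + (if 2*f+c \<le> K then f else k) \<le> c + f"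
  using assms by (auto split: if_splits)

lemma ar2:
  fixes c1 c2 f1 f2 g1 g2 K k r :: nat
  assumes "c1 \<le> 1" "c2 \<le> 1" "f2 \<le> f1" "g2 \<le> g1" "g1 + c1 + f1 = g2 + c2 + f2" "K = 2*k + r" "r \<le> 1"
  shows "(if 2*f2+c2 \<le> K then f2 else k) \<le> (if 2*f1+c1 \<le> K then f1 else k) \<and>
    (if 2*f2+c2 \<le> K then g2 else g2 + c2 + f2 - r - k) \<le> (if 2*f1+c1 \<le> K then g1 else g1 + c1 + f1 - r - k)"
  using assms by (auto split: if_splits)

lemma ar3:
  fixes c f g K k :: nat
  assumes "c \<le> 1" "K = 2*k"
  shows "(if 2*f+c \<le> Suc K then f else k) \<le> (if 2*f+c \<le> K then f else k) \<and>
    (if 2*f+c \<le> Suc K then g else g + c + f - 1 - k) \<le> (if 2*f+c \<le> K then g else g + c + f - 0 - k)"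
  using assms by (auto split: if_splits)

lemma ar4:
  fixes c f g K k :: nat
  assumes "c \<le> 1" "K = 2*k + 1"
  shows "(if 2*f+c \<le> K then f else k) \<le> (if 2*f+c \<le> Suc K then f else Suc k) \<and>
    (if 2*f+c \<le> K then g else g + c + f - 1 - k) \<le> (if 2*f+c \<le> Suc K then g else g + c + f - 0 - Suc k)"
  using assms by (auto split: if_splits)

definition Phi :: "nat \<Rightarrow> (nat\<Rightarrow>nat)\<times>(nat\<Rightarrow>nat)\<times>(nat\<Rightarrow>nat)\<times>(nat\<Rightarrow>nat) \<Rightarrow> (nat\<Rightarrow>nat)\<times>(nat\<Rightarrow>nat)\<times>(nat\<Rightarrow>nat)\<times>(nat\<Rightarrow>nat)" where
  "Phi K x = (case x of (c, b, f, g) \<Rightarrow>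
    (\<lambda>j. if 2*f j + c j \<le> K then c j else K mod 2,
     \<lambda>j. if 2*f j + c j \<le> K then c j else K mod 2,
     \<lambda>j. if 2*f j + c j \<le> K then f j else K div 2,
     \<lambda>j. if 2*f j + c j \<le> K then g j else g j + c j + f j - K mod 2 - K div 2))"

lemma Phi_simp: "Phi K (c, b, f, g) =
    (\<lambda>j. if 2*f j + c j \<le> K then c j else K mod 2,
     \<lambda>j. if 2*f j + c j \<le> K then c j else K mod 2,
     \<lambda>j. if 2*f j + c j \<le> K then f j else K div 2,
     \<lambda>j. if 2*f j + c j \<le> K then g j else g j + c j + f j - K mod 2 - K div 2)"
  by (simp add: Phi_def)

lemma obj_split: "\<exists>c b f g. x = (c, b, f, g)" by (metis prod.exhaust)

lemma Obj_facts:
  assumes "(c,b,f,g) \<in> Obj (KC n d)"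
  shows "\<forall>j. c j \<le> 1" "\<forall>j\<ge>n. c j = 0" "b = c" "\<forall>j\<ge>n. f j = 0" "\<forall>j\<ge>n. g j = 0" "\<forall>j. d j = g j + c j + f j"
  using assms unfolding Obj_K Tset_iff carr_def by blast+

lemma Phi_Obj:
  assumes x: "(c,b,f,g) \<in> Obj (KC n d)"
  shows "Phi K (c,b,f,g) \<in> Obj (KC n d)"
proof -
  note X = Obj_facts[OF x]
  have K: "K = 2 * (K div 2) + K mod 2" "K mod 2 \<le> 1" by simp_all
  show ?thesis unfolding Phi_simp Obj_K Tset_iff carr_def
  proof (intro conjI allI impI CollectI refl)
    fix j
    show "(if 2*f j + c j \<le> K then c j else K mod 2) \<le> 1" using X(1) K by auto
    show "d j = (if 2*f j + c j \<le> K then g j else g j + c j + f j - K mod 2 - K div 2) +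
       (if 2*f j + c j \<le> K then c j else K mod 2) + (if 2*f j + c j \<le> K then f j else K div 2)"
      using ar1[of "c j" K "K div 2" "K mod 2" "f j"] X(1,6) K by (auto split: if_splits)
  next
    fix j assume "n \<le> j"
    then show "(if 2*f j + c j \<le> K then c j else K mod 2) = 0"
      "(if 2*f j + c j \<le> K then f j else K div 2) = 0"
      "(if 2*f j + c j \<le> K then g j else g j + c j + f j - K mod 2 - K div 2) = 0"
      using X by auto
  qed
qed

lemma Phi_mono:
  assumes x: "(c1,b1,f1,g1) \<in> Obj (KC n d)" and y: "(c2,b2,f2,g2) \<in> Obj (KC n d)"
    and r: "thin_cat.RC (KC n d) (c1,b1,f1,g1) (c2,b2,f2,g2)"
  shows "thin_cat.RC (KC n d) (Phi K (c1,b1,f1,g1)) (Phi K (c2,b2,f2,g2))"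
proof -
  note X = Obj_facts[OF x] and Y = Obj_facts[OF y]
  have le: "\<forall>j. f2 j \<le> f1 j \<and> g2 j \<le> g1 j" using RC_K[OF x y] r by blast
  have K: "K = 2 * (K div 2) + K mod 2" "K mod 2 \<le> 1" by simp_all
  show ?thesis
    unfolding Phi_simp RC_K[OF Phi_Obj[OF x, of K, unfolded Phi_simp] Phi_Obj[OF y, of K, unfolded Phi_simp]]
  proof
    fix j
    have "g1 j + c1 j + f1 j = g2 j + c2 j + f2 j" using X(6) Y(6) by metis
    then show "(if 2*f2 j + c2 j \<le> K then f2 j else K div 2) \<le> (if 2*f1 j + c1 j \<le> K then f1 j else K div 2) \<and>
      (if 2*f2 j + c2 j \<le> K then g2 j else g2 j + c2 j + f2 j - K mod 2 - K div 2) \<le>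
      (if 2*f1 j + c1 j \<le> K then g1 j else g1 j + c1 j + f1 j - K mod 2 - K div 2)"
      using ar2[of "c1 j" "c2 j" "f2 j" "f1 j" "g2 j" "g1 j" K "K div 2" "K mod 2"] X(1) Y(1) le K by blast
  qed
qed

lemma preo_K: "preo (thin_cat.RC (KC n d))"
  by (rule preo.intro) (rule thin_cat.RC_trans[OF thin_K])

lemma Phi_monof: "preo.monof (thin_cat.RC (KC n d)) (Obj (KC n d)) (Phi K)"
  unfolding preo.monof_def[OF preo_K]
proof (intro conjI ballI impI)
  fix a assume "a \<in> Obj (KC n d)"
  then show "Phi K a \<in> Obj (KC n d)" using Phi_Obj obj_split[of a] by metis
next
  fix a b assume "a \<in> Obj (KC n d)" "b \<in> Obj (KC n d)" "thin_cat.RC (KC n d) a b"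
  then show "thin_cat.RC (KC n d) (Phi K a) (Phi K b)" using Phi_mono obj_split[of a] obj_split[of b] by metis
qed

lemma Phi_cmp:
  "(\<forall>a\<in>Obj (KC n d). thin_cat.RC (KC n d) (Phi K a) (Phi (Suc K) a)) \<or>
   (\<forall>a\<in>Obj (KC n d). thin_cat.RC (KC n d) (Phi (Suc K) a) (Phi K a))"
proof (cases "even K")
  case True
  obtain k where Kk: "K = 2 * k" using True by blast
  have K: "K div 2 = k" "K mod 2 = 0" "Suc K mod 2 = 1" "Suc K div 2 = k" using Kk by auto
  have "thin_cat.RC (KC n d) (Phi K a) (Phi (Suc K) a)" if a: "a \<in> Obj (KC n d)" for a
  proof -
    obtain c b f g where ae: "a = (c,b,f,g)" using obj_split[of a] by blast
    note X = Obj_facts[OF a[unfolded ae]]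
    show ?thesis unfolding ae
      unfolding Phi_simp RC_K[OF Phi_Obj[OF a[unfolded ae], of K, unfolded Phi_simp] Phi_Obj[OF a[unfolded ae], of "Suc K", unfolded Phi_simp]]
    proof
      fix j
      show "(if 2*f j + c j \<le> Suc K then f j else Suc K div 2) \<le> (if 2*f j + c j \<le> K then f j else K div 2) \<and>
        (if 2*f j + c j \<le> Suc K then g j else g j + c j + f j - Suc K mod 2 - Suc K div 2) \<le>
        (if 2*f j + c j \<le> K then g j else g j + c j + f j - K mod 2 - K div 2)"
        unfolding K by (rule ar3[of "c j" K k "f j" "g j"]) (use X(1) Kk in auto)
    qed
  qed
  then show ?thesis by blast
next
  case False
  obtain k where Kk: "K = 2 * k + 1" using False oddE by blast
  have K: "K div 2 = k" "K mod 2 = 1" "Suc K mod 2 = 0" "Suc K div 2 = Suc k" using Kk by auto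
  have "thin_cat.RC (KC n d) (Phi (Suc K) a) (Phi K a)" if a: "a \<in> Obj (KC n d)" for a
  proof -
    obtain c b f g where ae: "a = (c,b,f,g)" using obj_split[of a] by blast
    note X = Obj_facts[OF a[unfolded ae]]
    show ?thesis unfolding ae
      unfolding Phi_simp RC_K[OF Phi_Obj[OF a[unfolded ae], of "Suc K", unfolded Phi_simp] Phi_Obj[OF a[unfolded ae], of K, unfolded Phi_simp]]
    proof
      fix j
      show "(if 2*f j + c j \<le> K then f j else K div 2) \<le> (if 2*f j + c j \<le> Suc K then f j else Suc K div 2) \<and>
        (if 2*f j + c j \<le> K then g j else g j + c j + f j - K mod 2 - K div 2) \<le>
        (if 2*f j + c j \<le> Suc K then g j else g j + c j + f j - Suc K mod 2 - Suc K div 2)"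
        unfolding K by (rule ar4[of "c j" K k "f j" "g j"]) (use X(1) Kk in auto)
    qed
  qed
  then show ?thesis by blast
qed

lemma Phi_id:
  assumes a: "a \<in> Obj (KC n d)"
  shows "Phi (2 * (\<Sum>j<n. d j)) a = a"
proof -
  obtain c b f g where ae: "a = (c,b,f,g)" using obj_split[of a] by blast
  note X = Obj_facts[OF a[unfolded ae]]
  have bound: "2 * f j + c j \<le> 2 * (\<Sum>j<n. d j)" for j
  proof (cases "j < n")
    case True
    have "d j \<le> (\<Sum>j<n. d j)" by (rule member_le_sum) (use True in auto)
    then show ?thesis using X(6) by (metis le_add2 add_le_mono add.commute le_trans mult_2 add.assoc)
  next
    case False
    then show ?thesis using X by auto
  qed
  show ?thesis unfolding ae Phi_simp using bound X(3) by (simp add: fun_eq_iff)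
qed

lemma T_Obj: "d \<in> carrier (Nmon n) \<Longrightarrow> ((\<lambda>_. 0), (\<lambda>_. 0), (\<lambda>_. 0), d) \<in> Obj (KC n d)"
  unfolding Obj_K by (auto simp: Tset_iff carr_def Nmon_def)

lemma T0:
  assumes d: "d \<in> carrier (Nmon n)" and a: "a \<in> Obj (KC n d)"
  shows "thin_cat.RC (KC n d) (Phi 0 a) ((\<lambda>_. 0), (\<lambda>_. 0), (\<lambda>_. 0), d)"
proof -
  obtain c b f g where ae: "a = (c,b,f,g)" using obj_split[of a] by blast
  note X = Obj_facts[OF a[unfolded ae]]
  show ?thesis unfolding ae
    unfolding Phi_simp RC_K[OF Phi_Obj[OF a[unfolded ae], of 0, unfolded Phi_simp] T_Obj[OF d]]
    using X(6) by auto
qed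

theorem mainTheorem15:
  shows "strong_coinitial (full_subcat (FCat (Nmon n)) (Tset n)) (FCat (Nmon n)) id id"
  unfolding strong_coinitial_def
proof
  fix d assume "d \<in> Obj (FCat (Nmon n))"
  then have d: "d \<in> carrier (Nmon n)" by (simp add: FCat_def)
  show "connected_cat (KC n d) \<and> (\<forall>q>0. colim_Z_vanishes (KC n d) q)"
    by (rule thin_cat.acyclic[OF thin_K, where \<Phi>=Phi and N="2 * (\<Sum>j<n. d j)" and T="((\<lambda>_. 0), (\<lambda>_. 0), (\<lambda>_. 0), d)"])
       (use Phi_monof Phi_cmp Phi_id T_Obj[OF d] T0[OF d] in auto)
qed

end
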